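(* Let $\mathcal{D}\subseteq\{0,1\}^n$ be a nonempty down-monotone set and let $f:\{0,1\}^n\to\mathbb{R}$ be submodular on $\mathcal{D}$. If $f(0)>0$, then there are at least $\frac{1}{n+1}|\mathcal{D}|$ points $y\in\mathcal{D}$ with $f(y)\neq 0$.
   Context: $\mathcal{D}$ is down-monotone if $y\in\mathcal{D}$ and $x\le y$ (coordinatewise) imply $x\in\mathcal{D}$. $f$ is submodular on $\mathcal{D}$ (has non-increasing marginals on $\mathcal{D}$) if $f(x+\mathbf{e}_i)-f(x)\ge f(y+\mathbf{e}_i)-f(y)$ for all $i$ and all $x\le y$ with $x_i=y_i=0$ and $x+\mathbf{e}_i, y+\mathbf{e}_i\in\mathcal{D}$, where $\mathbf{e}_i$ is the $i$-th standard basis vector. *)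

theory Defs
  imports Complex_Main
begin

text \<open>Points of {0,1}^n are represented as functions x :: nat => nat with
  x i in {0,1} for i < n and x i = 0 for i >= n. The coordinatewise order is
  the pointwise order on functions.\<close>

definition cube :: "nat \<Rightarrow> (nat \<Rightarrow> nat) set" where
  "cube n = {x. (\<forall>i<n. x i \<in> {0, 1}) \<and> (\<forall>i\<ge>n. x i = 0)}"

definition unit_vec :: "nat \<Rightarrow> nat \<Rightarrow> nat" ("\<e>") where
  "unit_vec i = (\<lambda>j. if j = i then 1 else 0)"

definition add_unit :: "(nat \<Rightarrow> nat) \<Rightarrow> nat \<Rightarrow> (nat \<Rightarrow> nat)" where
  "add_unit x i = (\<lambda>j. x j + \<e> i j)"

definition down_monotone :: "(nat \<Rightarrow> nat) set \<Rightarrow> bool" where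
  "down_monotone D \<longleftrightarrow> (\<forall>x y. y \<in> D \<and> x \<le> y \<longrightarrow> x \<in> D)"

definition submodular_on ::
  "nat \<Rightarrow> (nat \<Rightarrow> nat) set \<Rightarrow> ((nat \<Rightarrow> nat) \<Rightarrow> real) \<Rightarrow> bool" where
  "submodular_on n D f \<longleftrightarrow>
     (\<forall>i<n. \<forall>x y. x \<le> y \<and> x i = 0 \<and> y i = 0 \<and> add_unit x i \<in> D \<and> add_unit y i \<in> D \<longrightarrow>
        f (add_unit x i) - f x \<ge> f (add_unit y i) - f y)"

end

theory Submission
  imports Defs
begin

definition ind :: "nat set \<Rightarrow> nat \<Rightarrow> nat" where
  "ind S = (\<lambda>j. if j \<in> S then 1 else 0)"

lemma cube_ind: "x \<in> cube n \<Longrightarrow> x = ind {j. x j = 1} \<and> {j. x j = 1} \<subseteq> {..<n}"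
  unfolding cube_def ind_def
  apply (auto simp: fun_eq_iff)
  by (metis leI nat.distinct(1))+

lemma cube_eq: "cube n = ind ` Pow {..<n}"
proof
  show "cube n \<subseteq> ind ` Pow {..<n}"
    using cube_ind by (metis (no_types, lifting) PowI image_eqI subsetI)
  show "ind ` Pow {..<n} \<subseteq> cube n"
    unfolding cube_def ind_def by auto
qed

lemma finite_cube: "finite (cube n)"
  by (simp add: cube_eq)

lemma key:
  fixes n :: nat and D :: "(nat \<Rightarrow> nat) set" and f :: "(nat \<Rightarrow> nat) \<Rightarrow> real"
  assumes D: "D \<subseteq> cube n" and dm: "down_monotone D" and sm: "submodular_on n D f"
    and f0: "f (\<lambda>_. 0) > 0" and yD: "y \<in> D" and fy: "f y = 0"
    and nb: "\<And>i. y i = 1 \<Longrightarrow> f (y(i:=0)) = 0"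
  shows False
proof -
  define S where "S = {j. y j = 1}"
  have yS: "y = ind S" and Sn: "S \<subseteq> {..<n}" using cube_ind[of y n] yD D S_def by auto
  have fin: "finite S" using Sn finite_subset by blast
  have "finite T \<Longrightarrow> T \<subseteq> S \<Longrightarrow> f (ind T) \<ge> f (\<lambda>_. 0)" for T
  proof (induction T rule: finite_induct)
    case empty
    then show ?case by (simp add: ind_def)
  next
    case (insert i T)
    have iS: "i \<in> S" and TS: "T \<subseteq> S" using insert by auto
    have IH: "f (ind T) \<ge> f (\<lambda>_. 0)" using insert TS by auto
    define z where "z = ind (S - {i})"
    have le1: "ind T \<le> z" using TS insert(2) unfolding z_def ind_def le_fun_def by auto
    have a1: "add_unit (ind T) i = ind (insert i T)"
      using insert(2) unfolding add_unit_def ind_def unit_vec_def by (auto simp: fun_eq_iff)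
    have a2: "add_unit z i = y"
      using iS unfolding yS z_def add_unit_def ind_def unit_vec_def by (auto simp: fun_eq_iff)
    have zy: "z = y(i:=0)" unfolding z_def yS ind_def by (auto simp: fun_eq_iff)
    have le2: "ind (insert i T) \<le> y" using insert iS unfolding yS ind_def le_fun_def by auto
    have inD: "ind (insert i T) \<in> D" using dm yD le2 unfolding down_monotone_def by blast
    have "i < n" using iS Sn by auto
    moreover have "ind T i = 0" "z i = 0" using insert(2) unfolding z_def ind_def by auto
    ultimately have "f (add_unit (ind T) i) - f (ind T) \<ge> f (add_unit z i) - f z"
      using sm le1 inD yD a1 a2 unfolding submodular_on_def by metis
    moreover have "f z = 0" using zy nb iS S_def by simp
    ultimately show ?case using a1 a2 fy IH by simp
  qed
  from this[OF fin] have "f y \<ge> f (\<lambda>_. 0)" using yS by simp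
  then show False using f0 fy by simp
qed

theorem lemma8:
  fixes n :: nat and D :: "(nat \<Rightarrow> nat) set" and f :: "(nat \<Rightarrow> nat) \<Rightarrow> real"
  assumes "D \<subseteq> cube n"
    and "D \<noteq> {}"
    and "down_monotone D"
    and "submodular_on n D f"
    and "f (\<lambda>_. 0) > 0"
  shows "real (card {y \<in> D. f y \<noteq> 0}) \<ge> real (card D) / real (n + 1)"
proof -
  define N where "N = {y \<in> D. f y \<noteq> 0}"
  have finD: "finite D" using assms(1) finite_cube finite_subset by blast
  have finN: "finite N" using finD N_def by simp
  have sub: "D \<subseteq> N \<union> (\<lambda>(x,i). add_unit x i) ` (N \<times> {..<n})"
  proof
    fix y assume yD: "y \<in> D"
    show "y \<in> N \<union> (\<lambda>(x,i). add_unit x i) ` (N \<times> {..<n})"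
    proof (cases "f y = 0")
      case False then show ?thesis using yD N_def by auto
    next
      case True
      have "\<exists>i. y i = 1 \<and> f (y(i:=0)) \<noteq> 0"
      proof (rule ccontr)
        assume "\<not> (\<exists>i. y i = 1 \<and> f (y(i:=0)) \<noteq> 0)"
        then have "\<And>i. y i = 1 \<Longrightarrow> f (y(i:=0)) = 0" by blast
        from key[OF assms(1,3,4,5) yD True this] show False .
      qed
      then obtain i where yi: "y i = 1" and fi: "f (y(i:=0)) \<noteq> 0" by blast
      have "y(i:=0) \<le> y" by (auto simp: le_fun_def)
      moreover have "\<forall>x y. y \<in> D \<and> x \<le> y \<longrightarrow> x \<in> D" using assms(3) unfolding down_monotone_def .
      ultimately have xD: "y(i:=0) \<in> D" using yD by meson
      have "y \<in> cube n" using yD assms(1) by blast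
      then have c: "\<forall>j\<ge>n. y j = 0" unfolding cube_def by simp
      have "i < n"
      proof (rule ccontr)
        assume "\<not> i < n"
        then have "y i = 0" using c by simp
        then show False using yi by simp
      qed
      moreover have "add_unit (y(i:=0)) i = y"
        using yi unfolding add_unit_def unit_vec_def by (auto simp: fun_eq_iff)
      moreover have "y(i:=0) \<in> N" using xD fi unfolding N_def by blast
      ultimately have "y \<in> (\<lambda>(x,i). add_unit x i) ` (N \<times> {..<n})"
        by (metis (no_types, lifting) SigmaI case_prod_conv image_eqI lessThan_iff)
      then show ?thesis by (rule UnI2)
    qed
  qed
  have "card D \<le> card (N \<union> (\<lambda>(x,i). add_unit x i) ` (N \<times> {..<n}))"
    using sub finN by (intro card_mono) auto
  also have "\<dots> \<le> card N + card ((\<lambda>(x,i). add_unit x i) ` (N \<times> {..<n}))"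
    by (rule card_Un_le)
  also have "\<dots> \<le> card N + card (N \<times> {..<n})"
    using card_image_le[of "N \<times> {..<n}" "\<lambda>(x,i). add_unit x i"] finN by simp
  also have "\<dots> = card N * (n + 1)" by (simp add: card_cartesian_product)
  finally have "real (card D) \<le> real (card N) * real (n + 1)" 
    by (metis of_nat_le_iff of_nat_mult)
  then show ?thesis unfolding N_def[symmetric] by (simp add: divide_le_eq)
qed

end
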